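(* Let $\Lambda$ be a finite non-uniform $m\times k$ rectangular grid with $m\geq 3$ and $k\geq 3$, and let $G$ be the graph produced by the construction described in the context. Then every missing edge that has an endpoint which is a boundary vertex of $\Lambda$ lies in a $2$-cell face of $G$.
   Context: $\Lambda$ has horizontal lines $h_1,\dots,h_m$ (bottom to top) and vertical lines $v_1,\dots,v_k$ (left to right) with arbitrary spacings; $p_{i,j}=h_i\cap v_j$. Its edges are the segments $p_{i,j}p_{i+1,j}$ and $p_{i,j}p_{i,j+1}$. Vertices on $h_1,h_m,v_1,v_k$ are boundary vertices; an edge with both endpoints boundary vertices is a boundary edge, all others are internal. The horizontal slab $H_i$ ($1\le i<m$) is the strip between $h_i,h_{i+1}$; the vertical slab $V_j$ ($1\le j<k$) is the strip between $v_j,v_{j+1}$; the width of a slab is the distance between its bounding lines. The red edges are $(p_{i,j},p_{i+1,j})$ and $(p_{i,j},p_{i,j+1})$ for $2\le i\le m-1$, $2\le j\le k-1$ with $i,j$ both even or both odd; all other internal edges are blue. Construction: let $G'$ be $\Lambda$ with all red edges removed, and $E'=\emptyset$. Iterate over the slabs $H_1,\dots,H_{m-1},V_1,\dots,V_{k-1}$ in non-decreasing order of width; for the current slab, consider the red edges lying in it (in any order); a red edge $(a,b)$ is added to $E'$ if both $a$ and $b$ currently have degree exactly $2$ in $G'\cup E'$. Finally $G=G'\cup E'$ (a plane straight-line graph). A missing edge is a red edge not in $G$. A cell of $\Lambda$ is a rectangle bounded by two consecutive horizontal and two consecutive vertical lines; a $2$-cell face of $G$ is a bounded face of $G$ that is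 the union of exactly two cells. *)

theory Defs
  imports "HOL-Analysis.Analysis"
begin

text \<open>Vertices of the grid are index pairs (i,j), meaning p_{i,j} = h_i \<inter> v_j,
  with 1 \<le> i \<le> m (row / horizontal line) and 1 \<le> j \<le> k (column / vertical line).\<close>

type_synonym vtx = "nat \<times> nat"
type_synonym edge = "vtx set"

definition grid_edges :: "nat \<Rightarrow> nat \<Rightarrow> edge set" where
  "grid_edges m k =
     {{(i,j),(Suc i,j)} | i j. 1 \<le> i \<and> i < m \<and> 1 \<le> j \<and> j \<le> k} \<union>
     {{(i,j),(i,Suc j)} | i j. 1 \<le> i \<and> i \<le> m \<and> 1 \<le> j \<and> j < k}"

definition boundary_vertex :: "nat \<Rightarrow> nat \<Rightarrow> vtx \<Rightarrow> bool" where
  "boundary_vertex m k v \<longleftrightarrow> fst v = 1 \<or> fst v = m \<or> snd v = 1 \<or> snd v = k"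

definition boundary_edge :: "nat \<Rightarrow> nat \<Rightarrow> edge \<Rightarrow> bool" where
  "boundary_edge m k e \<longleftrightarrow> (\<forall>v\<in>e. boundary_vertex m k v)"

definition internal_edges :: "nat \<Rightarrow> nat \<Rightarrow> edge set" where
  "internal_edges m k = {e \<in> grid_edges m k. \<not> boundary_edge m k e}"

definition red_edges :: "nat \<Rightarrow> nat \<Rightarrow> edge set" where
  "red_edges m k =
     {{(i,j),(Suc i,j)} | i j. 2 \<le> i \<and> i \<le> m - 1 \<and> 2 \<le> j \<and> j \<le> k - 1 \<and> (even i \<longleftrightarrow> even j)} \<union>
     {{(i,j),(i,Suc j)} | i j. 2 \<le> i \<and> i \<le> m - 1 \<and> 2 \<le> j \<and> j \<le> k - 1 \<and> (even i \<longleftrightarrow> even j)}"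

definition blue_edges :: "nat \<Rightarrow> nat \<Rightarrow> edge set" where
  "blue_edges m k = internal_edges m k - red_edges m k"

definition G_init :: "nat \<Rightarrow> nat \<Rightarrow> edge set" where
  "G_init m k = grid_edges m k - red_edges m k"

text \<open>Slabs: HS i is the horizontal slab between h_i and h_{i+1};
  VS j is the vertical slab between v_j and v_{j+1}.\<close>
datatype slab = HS nat | VS nat

definition slabs :: "nat \<Rightarrow> nat \<Rightarrow> slab set" where
  "slabs m k = HS ` {1..<m} \<union> VS ` {1..<k}"

fun slab_width :: "(nat \<Rightarrow> real) \<Rightarrow> (nat \<Rightarrow> real) \<Rightarrow> slab \<Rightarrow> real" where
  "slab_width xs ys (HS i) = ys (Suc i) - ys i"
| "slab_width xs ys (VS j) = xs (Suc j) - xs j"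

fun edge_in_slab :: "slab \<Rightarrow> edge \<Rightarrow> bool" where
  "edge_in_slab (HS i) e \<longleftrightarrow> (\<exists>j. e = {(i,j),(Suc i,j)})"
| "edge_in_slab (VS j) e \<longleftrightarrow> (\<exists>i. e = {(i,j),(i,Suc j)})"

definition degree :: "edge set \<Rightarrow> vtx \<Rightarrow> nat" where
  "degree E v = card {e \<in> E. v \<in> e}"

definition greedy_step :: "edge set \<Rightarrow> edge set \<Rightarrow> edge \<Rightarrow> edge set" where
  "greedy_step G0 E e = (if (\<forall>v\<in>e. degree (G0 \<union> E) v = 2) then insert e E else E)"

definition greedy_run :: "edge set \<Rightarrow> edge list \<Rightarrow> edge set" where
  "greedy_run G0 L = foldl (greedy_step G0) {} L"

definition valid_order ::
  "nat \<Rightarrow> nat \<Rightarrow> (nat \<Rightarrow> real) \<Rightarrow> (nat \<Rightarrow> real) \<Rightarrow> slab list \<Rightarrow> (slab \<Rightarrow> edge list) \<Rightarrow> bool" where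
  "valid_order m k xs ys sl ord \<longleftrightarrow>
     distinct sl \<and> set sl = slabs m k \<and>
     sorted_wrt (\<lambda>s t. slab_width xs ys s \<le> slab_width xs ys t) sl \<and>
     (\<forall>s\<in>set sl. distinct (ord s) \<and> set (ord s) = {e \<in> red_edges m k. edge_in_slab s e})"

definition constructed_graph :: "nat \<Rightarrow> nat \<Rightarrow> slab list \<Rightarrow> (slab \<Rightarrow> edge list) \<Rightarrow> edge set" where
  "constructed_graph m k sl ord =
     G_init m k \<union> greedy_run (G_init m k) (concat (map ord sl))"

text \<open>Geometry: x-coordinates xs j of v_j, y-coordinates ys i of h_i.\<close>
definition pt :: "(nat \<Rightarrow> real) \<Rightarrow> (nat \<Rightarrow> real) \<Rightarrow> vtx \<Rightarrow> real \<times> real" where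
  "pt xs ys v = (xs (snd v), ys (fst v))"

definition edge_seg :: "(nat \<Rightarrow> real) \<Rightarrow> (nat \<Rightarrow> real) \<Rightarrow> edge \<Rightarrow> (real \<times> real) set" where
  "edge_seg xs ys e = \<Union> {closed_segment (pt xs ys a) (pt xs ys b) | a b. e = {a,b}}"

definition edge_open_seg :: "(nat \<Rightarrow> real) \<Rightarrow> (nat \<Rightarrow> real) \<Rightarrow> edge \<Rightarrow> (real \<times> real) set" where
  "edge_open_seg xs ys e = \<Union> {open_segment (pt xs ys a) (pt xs ys b) | a b. e = {a,b}}"

definition drawing :: "(nat \<Rightarrow> real) \<Rightarrow> (nat \<Rightarrow> real) \<Rightarrow> edge set \<Rightarrow> (real \<times> real) set" where
  "drawing xs ys E = (\<Union>e\<in>E. edge_seg xs ys e)"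

definition faces :: "(nat \<Rightarrow> real) \<Rightarrow> (nat \<Rightarrow> real) \<Rightarrow> edge set \<Rightarrow> (real \<times> real) set set" where
  "faces xs ys E = components (- drawing xs ys E)"

definition cells :: "nat \<Rightarrow> nat \<Rightarrow> vtx set" where
  "cells m k = {(i,j). 1 \<le> i \<and> i < m \<and> 1 \<le> j \<and> j < k}"

definition cell :: "(nat \<Rightarrow> real) \<Rightarrow> (nat \<Rightarrow> real) \<Rightarrow> vtx \<Rightarrow> (real \<times> real) set" where
  "cell xs ys c = cbox (xs (snd c), ys (fst c)) (xs (Suc (snd c)), ys (Suc (fst c)))"

definition two_cell_face ::
  "nat \<Rightarrow> nat \<Rightarrow> (nat \<Rightarrow> real) \<Rightarrow> (nat \<Rightarrow> real) \<Rightarrow> edge set \<Rightarrow> (real \<times> real) set \<Rightarrow> bool" where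
  "two_cell_face m k xs ys E F \<longleftrightarrow>
     F \<in> faces xs ys E \<and> bounded F \<and>
     (\<exists>c1 c2. c1 \<in> cells m k \<and> c2 \<in> cells m k \<and> c1 \<noteq> c2 \<and>
              closure F = cell xs ys c1 \<union> cell xs ys c2)"

end

theory Submission imports Defs begin
lemma seg_vert: "closed_segment ((a::real), (b::real)) (a, d) = {a} \<times> closed_segment b d"
proof (intro set_eqI iffI)
  fix p assume "p \<in> closed_segment (a, b) (a, d)"
  then obtain u where "0 \<le> u" "u \<le> 1" "p = (1 - u) *\<^sub>R (a, b) + u *\<^sub>R (a, d)" by (auto simp: in_segment)
  then show "p \<in> {a} \<times> closed_segment b d" by (auto simp: in_segment algebra_simps)
next
  fix p assume "p \<in> {a} \<times> closed_segment b d"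
  then obtain u where "0 \<le> u" "u \<le> 1" "p = (a, (1 - u) *\<^sub>R b + u *\<^sub>R d)" by (auto simp: in_segment)
  then show "p \<in> closed_segment (a, b) (a, d)" unfolding in_segment
    by (intro exI[of _ u]) (auto simp: algebra_simps)
qed
lemma seg_horiz: "closed_segment ((a::real), (b::real)) (c, b) = closed_segment a c \<times> {b}"
proof (intro set_eqI iffI)
  fix p assume "p \<in> closed_segment (a, b) (c, b)"
  then obtain u where "0 \<le> u" "u \<le> 1" "p = (1 - u) *\<^sub>R (a, b) + u *\<^sub>R (c, b)" by (auto simp: in_segment)
  then show "p \<in> closed_segment a c \<times> {b}" by (auto simp: in_segment algebra_simps)
next
  fix p assume "p \<in> closed_segment a c \<times> {b}"
  then obtain u where "0 \<le> u" "u \<le> 1" "p = ((1 - u) *\<^sub>R a + u *\<^sub>R c, b)" by (auto simp: in_segment)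
  then show "p \<in> closed_segment (a, b) (c, b)" unfolding in_segment
    by (intro exI[of _ u]) (auto simp: algebra_simps)
qed
lemma oseg_vert: "open_segment ((a::real), (b::real)) (a, d) = {a} \<times> open_segment b d"
  by (auto simp: open_segment_def seg_vert)
lemma oseg_horiz: "open_segment ((a::real), (b::real)) (c, b) = open_segment a c \<times> {b}"
  by (auto simp: open_segment_def seg_horiz)
lemma edge_seg2: "edge_seg xs ys {u,w} = closed_segment (pt xs ys u) (pt xs ys w)"
proof -
  have "{closed_segment (pt xs ys a) (pt xs ys b) | a b. {u,w} = {a,b}} = {closed_segment (pt xs ys u) (pt xs ys w)}"
    apply (rule equalityI)
     apply (auto simp: doubleton_eq_iff closed_segment_commute)[1]
    by blast
  then show ?thesis unfolding edge_seg_def by simp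
qed
lemma edge_oseg2: "edge_open_seg xs ys {u,w} = open_segment (pt xs ys u) (pt xs ys w)"
proof -
  have "{open_segment (pt xs ys a) (pt xs ys b) | a b. {u,w} = {a,b}} = {open_segment (pt xs ys u) (pt xs ys w)}"
    apply (rule equalityI)
     apply (auto simp: doubleton_eq_iff open_segment_commute)[1]
    by blast
  then show ?thesis unfolding edge_open_seg_def by simp
qed
lemma box_Pair_iff: "((x::real), (y::real)) \<in> box (a, c) (b, d) \<longleftrightarrow> a < x \<and> x < b \<and> c < y \<and> y < d"
  by (auto simp: mem_box Basis_prod_def)
lemma rect_face:
  fixes a b c d :: real and D :: "(real \<times> real) set"
  assumes "a < c" "b < d" "box (a,b) (c,d) \<inter> D = {}" "cbox (a,b) (c,d) - box (a,b) (c,d) \<subseteq> D"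
  shows "box (a,b) (c,d) \<in> components (-D)"
proof -
  let ?B = "box (a,b) (c,d)"
  have ne: "?B \<noteq> {}"
  proof -
    have "((a+c)/2, (b+d)/2) \<in> ?B" using assms(1,2) by (simp add: box_Pair_iff)
    then show ?thesis by blast
  qed
  have fr: "frontier ?B \<subseteq> D" using assms(4) ne by (simp add: frontier_box)
  show ?thesis unfolding in_components_maximal
  proof (intro conjI allI impI)
    show "?B \<noteq> {}" by (rule ne)
    show "?B \<subseteq> - D" using assms(3) by blast
    show "connected ?B" by (simp add: convex_connected)
    fix S assume S: "S \<noteq> {} \<and> ?B \<subseteq> S \<and> S \<subseteq> - D \<and> connected S"
    show "S = ?B"
    proof (rule ccontr)
      assume "S \<noteq> ?B"
      then have "S - ?B \<noteq> {}" using S by blast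
      moreover have "S \<inter> ?B \<noteq> {}" using S ne by blast
      ultimately have "S \<inter> frontier ?B \<noteq> {}" using connected_Int_frontier S by blast
      then show False using fr S by blast
    qed
  qed
qed

lemma greedy_mono: "E \<subseteq> foldl (greedy_step G0) E L"
proof (induction L arbitrary: E)
  case Nil then show ?case by simp
next
  case (Cons x L)
  have "E \<subseteq> greedy_step G0 E x" by (auto simp: greedy_step_def)
  then show ?case using Cons[of "greedy_step G0 E x"] by simp
qed

lemma greedy_sub: "foldl (greedy_step G0) E L \<subseteq> E \<union> set L"
proof (induction L arbitrary: E)
  case Nil then show ?case by simp
next
  case (Cons x L)
  have "greedy_step G0 E x \<subseteq> insert x E" by (auto simp: greedy_step_def)
  then show ?case using Cons[of "greedy_step G0 E x"] by auto
qed

lemma grid_nbr: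
  assumes "g \<in> grid_edges m k" "(p,q) \<in> g"
  shows "(g = {(p-1,q),(p,q)} \<and> 2 \<le> p) \<or> (g = {(p,q),(Suc p,q)} \<and> p < m)
       \<or> (g = {(p,q-1),(p,q)} \<and> 2 \<le> q) \<or> (g = {(p,q),(p,Suc q)} \<and> q < k)"
proof -
  from assms(1) consider (V) a b where "g = {(a,b),(Suc a,b)}" "1 \<le> a" "a < m"
    | (H) a b where "g = {(a,b),(a,Suc b)}" "1 \<le> b" "b < k"
    unfolding grid_edges_def by blast
  then show ?thesis
  proof cases
    case V
    with assms(2) have "(p,q) = (a,b) \<or> (p,q) = (Suc a, b)" by blast
    then show ?thesis
    proof
      assume "(p,q) = (a,b)" then show ?thesis using V by (intro disjI2 disjI1) simp
    next
      assume "(p,q) = (Suc a,b)" then show ?thesis using V by (intro disjI1) (simp add: insert_commute)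
    qed
  next
    case H
    with assms(2) have "(p,q) = (a,b) \<or> (p,q) = (a, Suc b)" by blast
    then show ?thesis
    proof
      assume "(p,q) = (a,b)" then show ?thesis using H by (intro disjI2 disjI2 disjI2) simp
    next
      assume "(p,q) = (a,Suc b)" then show ?thesis using H by (intro disjI2 disjI2 disjI1) (simp add: insert_commute)
    qed
  qed
qed

lemma sm:
  assumes "strict_mono_on {1..n} (f :: nat \<Rightarrow> real)" "1 \<le> a" "a \<le> n" "1 \<le> b" "b \<le> n"
  shows "(f a < f b \<longleftrightarrow> a < b) \<and> (f a \<le> f b \<longleftrightarrow> a \<le> b)"
  using strict_mono_on_less[OF assms(1), of a b] strict_mono_on_less_eq[OF assms(1), of a b] assms(2-5) by simp


lemma red_vert_iff: "{(a,b),(Suc a,b)} \<in> red_edges m k \<longleftrightarrow> 2 \<le> a \<and> a \<le> m-1 \<and> 2\<le>b \<and> b \<le> k-1 \<and> (even a \<longleftrightarrow> even b)"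
  unfolding red_edges_def by (auto simp: doubleton_eq_iff)
lemma red_horiz_iff: "{(a,b),(a,Suc b)} \<in> red_edges m k \<longleftrightarrow> 2 \<le> a \<and> a \<le> m-1 \<and> 2\<le>b \<and> b \<le> k-1 \<and> (even a \<longleftrightarrow> even b)"
  unfolding red_edges_def by (auto simp: doubleton_eq_iff)
lemma grid_vert_iff: "{(a,b),(Suc a,b)} \<in> grid_edges m k \<longleftrightarrow> 1 \<le> a \<and> a < m \<and> 1\<le>b \<and> b \<le> k"
  unfolding grid_edges_def by (auto simp: doubleton_eq_iff)
lemma grid_horiz_iff: "{(a,b),(a,Suc b)} \<in> grid_edges m k \<longleftrightarrow> 1 \<le> a \<and> a \<le> m \<and> 1\<le>b \<and> b < k"
  unfolding grid_edges_def by (auto simp: doubleton_eq_iff)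
lemma red_sub_grid: "red_edges m k \<subseteq> grid_edges m k"
  unfolding red_edges_def by (auto simp: grid_vert_iff grid_horiz_iff)
lemma mem_draw: "g \<in> G \<Longrightarrow> p \<in> edge_seg xs ys g \<Longrightarrow> p \<in> drawing xs ys G"
  unfolding drawing_def by blast

lemma vert_case:
  fixes m k :: nat and xs ys :: "nat \<Rightarrow> real"
    and sl :: "slab list" and ord :: "slab \<Rightarrow> edge list" and i j ii jj :: nat
  assumes smx: "strict_mono_on {1..k} xs" and smy: "strict_mono_on {1..m} ys"
    and vo: "valid_order m k xs ys sl ord"
    and ij: "i = Suc ii" "j = Suc jj" "m = Suc i" "1 \<le> ii" "1 \<le> jj" "Suc j \<le> k"
    and par: "even i \<longleftrightarrow> even j"
    and eG: "{(i,j),(Suc i,j)} \<notin> constructed_graph m k sl ord"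
  shows "\<exists>F. two_cell_face m k xs ys (constructed_graph m k sl ord) F
             \<and> edge_open_seg xs ys {(i,j),(Suc i,j)} \<subseteq> F"
proof -
  define G where "G = constructed_graph m k sl ord"
  define G0 where "G0 = G_init m k"
  define L where "L = concat (map ord sl)"
  define e where "e = {(i,j),(Suc i,j)}"
  define f where "f = {(i,j),(i,Suc j)}"
  have eR: "e \<in> red_edges m k" unfolding e_def red_vert_iff using ij par by simp
  have fR: "f \<in> red_edges m k" unfolding f_def red_horiz_iff using ij par by simp
  have GG: "G = G0 \<union> greedy_run G0 L" by (simp add: G_def constructed_graph_def G0_def L_def)
  have Lred: "set L \<subseteq> red_edges m k" unfolding L_def using vo by (auto simp: valid_order_def)
  have G0grid: "G0 \<subseteq> grid_edges m k" by (auto simp: G0_def G_init_def)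
  have Ggrid: "G \<subseteq> grid_edges m k"
    using GG G0grid greedy_sub[of G0 "{}" L] Lred red_sub_grid unfolding greedy_run_def by blast
  have G0G: "G0 \<subseteq> G" using GG by blast
  have inG0: "g \<in> grid_edges m k \<Longrightarrow> g \<notin> red_edges m k \<Longrightarrow> g \<in> G0" for g
    by (simp add: G0_def G_init_def)
  have eL: "e \<in> set L"
  proof -
    have "HS i \<in> slabs m k" using ij by (simp add: slabs_def)
    then have s: "HS i \<in> set sl" using vo by (simp add: valid_order_def)
    then have "set (ord (HS i)) = {e \<in> red_edges m k. edge_in_slab (HS i) e}"
      using vo by (simp add: valid_order_def)
    then have "e \<in> set (ord (HS i))" using eR by (auto simp: e_def)
    then show ?thesis using s unfolding L_def by auto
  qed
  obtain L1 L2 where L: "L = L1 @ e # L2" using split_list[OF eL] by blast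
  define Eb where "Eb = foldl (greedy_step G0) {} L1"
  have fin: "greedy_run G0 L = foldl (greedy_step G0) (greedy_step G0 Eb e) L2"
    by (simp add: greedy_run_def L Eb_def)
  have st: "greedy_step G0 Eb e \<subseteq> greedy_run G0 L" unfolding fin by (rule greedy_mono)
  have Ebsub: "Eb \<subseteq> greedy_run G0 L" using st by (auto simp: greedy_step_def split: if_splits)
  have Ebred: "Eb \<subseteq> red_edges m k"
    using greedy_sub[of G0 "{}" L1] Lred unfolding Eb_def L by auto
  have eNG: "e \<notin> G" using eG by (simp add: e_def G_def)
  have "e \<notin> greedy_step G0 Eb e" using st eNG GG by blast
  then have ndeg: "\<not> (\<forall>v\<in>e. degree (G0 \<union> Eb) v = 2)" by (auto simp: greedy_step_def split: if_splits)
  have fG: "f \<in> G"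
  proof (rule ccontr)
    assume fN: "f \<notin> G"
    define H where "H = G0 \<union> Eb"
    have Hgrid: "H \<subseteq> grid_edges m k" using G0grid Ebred red_sub_grid unfolding H_def by blast
    have eH: "e \<notin> H" using eR eNG Ebsub GG unfolding H_def G0_def G_init_def by blast
    have fH: "f \<notin> H" using fR fN Ebsub GG unfolding H_def G0_def G_init_def by blast
    have g1: "{(ii,j),(i,j)} \<in> H" unfolding H_def
      using inG0[of "{(ii,j),(i,j)}"] ij par by (simp add: grid_vert_iff red_vert_iff)
    have g2: "{(i,jj),(i,j)} \<in> H" unfolding H_def
      using inG0[of "{(i,jj),(i,j)}"] ij par by (simp add: grid_horiz_iff red_horiz_iff)
    have g3: "{(Suc i,jj),(Suc i,j)} \<in> H" unfolding H_def
      using inG0[of "{(Suc i,jj),(Suc i,j)}"] ij par by (simp add: grid_horiz_iff red_horiz_iff)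
    have g4: "{(Suc i,j),(Suc i,Suc j)} \<in> H" unfolding H_def
      using inG0[of "{(Suc i,j),(Suc i,Suc j)}"] ij par by (simp add: grid_horiz_iff red_horiz_iff)
    have s1: "{g\<in>H. (i,j)\<in>g} = {{(ii,j),(i,j)}, {(i,jj),(i,j)}}"
    proof
      show "{g\<in>H. (i,j)\<in>g} \<subseteq> {{(ii,j),(i,j)}, {(i,jj),(i,j)}}"
      proof
        fix g assume g: "g \<in> {g\<in>H. (i,j)\<in>g}"
        then have "g \<in> grid_edges m k" "(i,j) \<in> g" "g \<noteq> e" "g \<noteq> f" using Hgrid eH fH by auto
        then show "g \<in> {{(ii,j),(i,j)}, {(i,jj),(i,j)}}"
          using grid_nbr[of g m k i j] ij unfolding e_def f_def by auto
      qed
      show "{{(ii,j),(i,j)}, {(i,jj),(i,j)}} \<subseteq> {g\<in>H. (i,j)\<in>g}" using g1 g2 by auto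
    qed
    have s2: "{g\<in>H. (Suc i,j)\<in>g} = {{(Suc i,jj),(Suc i,j)}, {(Suc i,j),(Suc i,Suc j)}}"
    proof
      show "{g\<in>H. (Suc i,j)\<in>g} \<subseteq> {{(Suc i,jj),(Suc i,j)}, {(Suc i,j),(Suc i,Suc j)}}"
      proof
        fix g assume g: "g \<in> {g\<in>H. (Suc i,j)\<in>g}"
        then have "g \<in> grid_edges m k" "(Suc i,j) \<in> g" "g \<noteq> e" using Hgrid eH by auto
        then show "g \<in> {{(Suc i,jj),(Suc i,j)}, {(Suc i,j),(Suc i,Suc j)}}"
          using grid_nbr[of g m k "Suc i" j] ij unfolding e_def by (auto simp: insert_commute)
      qed
      show "{{(Suc i,jj),(Suc i,j)}, {(Suc i,j),(Suc i,Suc j)}} \<subseteq> {g\<in>H. (Suc i,j)\<in>g}"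
        using g3 g4 by auto
    qed
    have d1: "degree H (i,j) = 2" unfolding degree_def s1 using ij by (simp add: doubleton_eq_iff)
    have d2: "degree H (Suc i,j) = 2" unfolding degree_def s2 using ij by (simp add: doubleton_eq_iff)
    show False using ndeg d1 d2 unfolding H_def e_def by auto
  qed
  have j1: "1 \<le> jj" "jj \<le> k" "1 \<le> j" "j \<le> k" "1 \<le> Suc j" "Suc j \<le> k" using ij by auto
  have i1: "1 \<le> i" "i \<le> m" "1 \<le> Suc i" "Suc i \<le> m" using ij by auto
  define x0 where "x0 = xs jj"
  define x1 where "x1 = xs j"
  define x2 where "x2 = xs (Suc j)"
  define y0 where "y0 = ys i"
  define y1 where "y1 = ys (Suc i)"
  have o1: "x0 < x1" unfolding x0_def x1_def using sm[OF smx, of jj j] j1 ij by simp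
  have o2: "x1 < x2" unfolding x2_def x1_def using sm[OF smx, of j "Suc j"] j1 ij by simp
  have o3: "y0 < y1" unfolding y0_def y1_def using sm[OF smy, of i "Suc i"] i1 ij by simp
  define F where "F = box (x0,y0) (x2,y1)"
  have Fne: "F \<noteq> {}"
  proof -
    have "((x0+x2)/2, (y0+y1)/2) \<in> F" using o1 o2 o3 by (simp add: F_def box_Pair_iff)
    then show ?thesis by blast
  qed
  have disj: "F \<inter> drawing xs ys G = {}"
  proof -
    have "edge_seg xs ys g \<inter> F = {}" if gG: "g \<in> G" for g
    proof -
      have gg: "g \<in> grid_edges m k" and gne: "g \<noteq> e" using gG Ggrid eNG by auto
      from gg consider (V) a b where "g = {(a,b),(Suc a,b)}" "1 \<le> a" "a < m" "1 \<le> b" "b \<le> k"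
        | (Hz) a b where "g = {(a,b),(a,Suc b)}" "1 \<le> a" "a \<le> m" "1 \<le> b" "b < k"
        unfolding grid_edges_def by blast
      then show ?thesis
      proof cases
        case V
        have le: "ys a \<le> ys (Suc a)" using sm[OF smy, of a "Suc a"] V by simp
        show ?thesis
        proof (rule ccontr)
          assume "edge_seg xs ys g \<inter> F \<noteq> {}"
          then obtain x y where p: "(x,y) \<in> edge_seg xs ys g" "(x,y) \<in> F" by auto
          then have xy: "x = xs b" "ys a \<le> y" "y \<le> ys (Suc a)"
            using le by (auto simp: V(1) edge_seg2 pt_def seg_vert closed_segment_eq_real_ivl)
          have b: "x0 < xs b" "xs b < x2" "y0 < y" "y < y1" using p(2) xy by (auto simp: F_def box_Pair_iff)
          have "jj < b" using b(1) sm[OF smx, of jj b] j1 V unfolding x0_def by simp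
          moreover have "b < Suc j" using b(2) sm[OF smx, of b "Suc j"] j1 V unfolding x2_def by simp
          moreover have "i < Suc a" using b(3) xy sm[OF smy, of i "Suc a"] i1 V unfolding y0_def by simp
          ultimately have "b = j" "a = i" using ij V by auto
          then show False using gne V unfolding e_def by simp
        qed
      next
        case Hz
        show ?thesis
        proof (rule ccontr)
          assume "edge_seg xs ys g \<inter> F \<noteq> {}"
          then obtain x y where p: "(x,y) \<in> edge_seg xs ys g" "(x,y) \<in> F" by auto
          then have xy: "y = ys a"
            by (auto simp: Hz(1) edge_seg2 pt_def seg_horiz)
          have b: "y0 < ys a" "ys a < y1" using p(2) xy by (auto simp: F_def box_Pair_iff)
          have "i < a" using b(1) sm[OF smy, of i a] i1 Hz unfolding y0_def by simp
          moreover have "a < Suc i" using b(2) sm[OF smy, of a "Suc i"] i1 Hz unfolding y1_def by simp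
          ultimately show False by simp
        qed
      qed
    qed
    then show ?thesis unfolding drawing_def by blast
  qed
  have cover: "cbox (x0,y0) (x2,y1) - box (x0,y0) (x2,y1) \<subseteq> drawing xs ys G"
  proof
    fix p assume p: "p \<in> cbox (x0,y0) (x2,y1) - box (x0,y0) (x2,y1)"
    obtain x y where pxy: "p = (x,y)" by (cases p)
    have r: "x0 \<le> x" "x \<le> x2" "y0 \<le> y" "y \<le> y1" using p pxy by (auto simp: cbox_interval)
    have nb: "x = x0 \<or> x = x2 \<or> y = y0 \<or> y = y1" using p pxy r by (auto simp: box_Pair_iff)
    have gl: "{(i,jj),(Suc i,jj)} \<in> G" using G0G inG0[of "{(i,jj),(Suc i,jj)}"] ij par
      by (auto simp: grid_vert_iff red_vert_iff)
    have gr: "{(i,Suc j),(Suc i,Suc j)} \<in> G" using G0G inG0[of "{(i,Suc j),(Suc i,Suc j)}"] ij par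
      by (auto simp: grid_vert_iff red_vert_iff)
    have gt1: "{(Suc i,jj),(Suc i,j)} \<in> G" using G0G inG0[of "{(Suc i,jj),(Suc i,j)}"] ij par
      by (auto simp: grid_horiz_iff red_horiz_iff)
    have gt2: "{(Suc i,j),(Suc i,Suc j)} \<in> G" using G0G inG0[of "{(Suc i,j),(Suc i,Suc j)}"] ij par
      by (auto simp: grid_horiz_iff red_horiz_iff)
    have gb1: "{(i,jj),(i,j)} \<in> G" using G0G inG0[of "{(i,jj),(i,j)}"] ij par
      by (auto simp: grid_horiz_iff red_horiz_iff)
    have s1: "(x,y) \<in> drawing xs ys G"
    proof -
      consider "x = x0" | "x = x2" | "x \<noteq> x0" "x \<noteq> x2" "y = y0" "x \<le> x1" | "x \<noteq> x0" "x \<noteq> x2" "y = y0" "x1 \<le> x"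
        | "x \<noteq> x0" "x \<noteq> x2" "y = y1" "x \<le> x1" | "x \<noteq> x0" "x \<noteq> x2" "y = y1" "x1 \<le> x"
        using nb by linarith
      then show ?thesis
      proof cases
        case 1 then show ?thesis using mem_draw[OF gl] r o3
          by (auto simp: edge_seg2 pt_def seg_vert closed_segment_eq_real_ivl x0_def y0_def y1_def)
      next
        case 2 then show ?thesis using mem_draw[OF gr] r o3
          by (auto simp: edge_seg2 pt_def seg_vert closed_segment_eq_real_ivl x2_def y0_def y1_def)
      next
        case 3 then show ?thesis using mem_draw[OF gb1] r o1
          by (auto simp: edge_seg2 pt_def seg_horiz closed_segment_eq_real_ivl x0_def x1_def y0_def ij)
      next
        case 4 then show ?thesis using mem_draw[OF fG] r o2
          by (auto simp: f_def edge_seg2 pt_def seg_horiz closed_segment_eq_real_ivl x2_def x1_def y0_def)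
      next
        case 5 then show ?thesis using mem_draw[OF gt1] r o1
          by (auto simp: edge_seg2 pt_def seg_horiz closed_segment_eq_real_ivl x0_def x1_def y1_def ij)
      next
        case 6 then show ?thesis using mem_draw[OF gt2] r o2
          by (auto simp: edge_seg2 pt_def seg_horiz closed_segment_eq_real_ivl x2_def x1_def y1_def)
      qed
    qed
    then show "p \<in> drawing xs ys G" using pxy by simp
  qed
  have face: "F \<in> faces xs ys G"
    unfolding faces_def F_def by (rule rect_face[OF _ o3 _ cover]) (use o1 o2 disj F_def in auto)
  have clo: "closure F = cell xs ys (i,jj) \<union> cell xs ys (i,j)"
  proof -
    have "closure F = cbox (x0,y0) (x2,y1)" using Fne by (simp add: F_def)
    also have "\<dots> = cbox (x0,y0) (x1,y1) \<union> cbox (x1,y0) (x2,y1)"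
      using o1 o2 by (auto simp: cbox_interval)
    also have "\<dots> = cell xs ys (i,jj) \<union> cell xs ys (i,j)"
      by (simp add: cell_def x0_def x1_def x2_def y0_def y1_def ij)
    finally show ?thesis .
  qed
  have cl: "(i,jj) \<in> cells m k" "(i,j) \<in> cells m k" "(i,jj) \<noteq> (i,j)" using ij by (auto simp: cells_def)
  have tc: "two_cell_face m k xs ys G F"
    unfolding two_cell_face_def using face clo cl by (auto simp: F_def)
  have os: "edge_open_seg xs ys e \<subseteq> F"
    using o1 o2 o3 by (auto simp: e_def edge_oseg2 pt_def oseg_vert open_segment_eq_real_ivl F_def box_Pair_iff x1_def y0_def y1_def)
  show ?thesis using tc os unfolding G_def e_def by blast
qed
lemma horiz_case:
  fixes m k :: nat and xs ys :: "nat \<Rightarrow> real"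
    and sl :: "slab list" and ord :: "slab \<Rightarrow> edge list" and i j ii jj :: nat
  assumes smx: "strict_mono_on {1..k} xs" and smy: "strict_mono_on {1..m} ys"
    and vo: "valid_order m k xs ys sl ord"
    and ij: "i = Suc ii" "j = Suc jj" "k = Suc j" "1 \<le> ii" "1 \<le> jj" "Suc i \<le> m"
    and par: "even i \<longleftrightarrow> even j"
    and eG: "{(i,j),(i,Suc j)} \<notin> constructed_graph m k sl ord"
  shows "\<exists>F. two_cell_face m k xs ys (constructed_graph m k sl ord) F
             \<and> edge_open_seg xs ys {(i,j),(i,Suc j)} \<subseteq> F"
proof -
  define G where "G = constructed_graph m k sl ord"
  define G0 where "G0 = G_init m k"
  define L where "L = concat (map ord sl)"
  define e where "e = {(i,j),(i,Suc j)}"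
  define f where "f = {(i,j),(Suc i,j)}"
  have eR: "e \<in> red_edges m k" unfolding e_def red_horiz_iff using ij par by simp
  have fR: "f \<in> red_edges m k" unfolding f_def red_vert_iff using ij par by simp
  have GG: "G = G0 \<union> greedy_run G0 L" by (simp add: G_def constructed_graph_def G0_def L_def)
  have Lred: "set L \<subseteq> red_edges m k" unfolding L_def using vo by (auto simp: valid_order_def)
  have G0grid: "G0 \<subseteq> grid_edges m k" by (auto simp: G0_def G_init_def)
  have Ggrid: "G \<subseteq> grid_edges m k"
    using GG G0grid greedy_sub[of G0 "{}" L] Lred red_sub_grid unfolding greedy_run_def by blast
  have G0G: "G0 \<subseteq> G" using GG by blast
  have inG0: "g \<in> grid_edges m k \<Longrightarrow> g \<notin> red_edges m k \<Longrightarrow> g \<in> G0" for g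
    by (simp add: G0_def G_init_def)
  have eL: "e \<in> set L"
  proof -
    have "VS j \<in> slabs m k" using ij by (simp add: slabs_def)
    then have s: "VS j \<in> set sl" using vo by (simp add: valid_order_def)
    then have "set (ord (VS j)) = {e \<in> red_edges m k. edge_in_slab (VS j) e}"
      using vo by (simp add: valid_order_def)
    then have "e \<in> set (ord (VS j))" using eR by (auto simp: e_def)
    then show ?thesis using s unfolding L_def by auto
  qed
  obtain L1 L2 where L: "L = L1 @ e # L2" using split_list[OF eL] by blast
  define Eb where "Eb = foldl (greedy_step G0) {} L1"
  have fin: "greedy_run G0 L = foldl (greedy_step G0) (greedy_step G0 Eb e) L2"
    by (simp add: greedy_run_def L Eb_def)
  have st: "greedy_step G0 Eb e \<subseteq> greedy_run G0 L" unfolding fin by (rule greedy_mono)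
  have Ebsub: "Eb \<subseteq> greedy_run G0 L" using st by (auto simp: greedy_step_def split: if_splits)
  have Ebred: "Eb \<subseteq> red_edges m k"
    using greedy_sub[of G0 "{}" L1] Lred unfolding Eb_def L by auto
  have eNG: "e \<notin> G" using eG by (simp add: e_def G_def)
  have "e \<notin> greedy_step G0 Eb e" using st eNG GG by blast
  then have ndeg: "\<not> (\<forall>v\<in>e. degree (G0 \<union> Eb) v = 2)" by (auto simp: greedy_step_def split: if_splits)
  have fG: "f \<in> G"
  proof (rule ccontr)
    assume fN: "f \<notin> G"
    define H where "H = G0 \<union> Eb"
    have Hgrid: "H \<subseteq> grid_edges m k" using G0grid Ebred red_sub_grid unfolding H_def by blast
    have eH: "e \<notin> H" using eR eNG Ebsub GG unfolding H_def G0_def G_init_def by blast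
    have fH: "f \<notin> H" using fR fN Ebsub GG unfolding H_def G0_def G_init_def by blast
    have g1: "{(ii,j),(i,j)} \<in> H" unfolding H_def
      using inG0[of "{(ii,j),(i,j)}"] ij par by (simp add: grid_vert_iff red_vert_iff)
    have g2: "{(i,jj),(i,j)} \<in> H" unfolding H_def
      using inG0[of "{(i,jj),(i,j)}"] ij par by (simp add: grid_horiz_iff red_horiz_iff)
    have g3: "{(ii,Suc j),(i,Suc j)} \<in> H" unfolding H_def
      using inG0[of "{(ii,Suc j),(i,Suc j)}"] ij par by (simp add: grid_vert_iff red_vert_iff)
    have g4: "{(i,Suc j),(Suc i,Suc j)} \<in> H" unfolding H_def
      using inG0[of "{(i,Suc j),(Suc i,Suc j)}"] ij par by (simp add: grid_vert_iff red_vert_iff)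
    have s1: "{g\<in>H. (i,j)\<in>g} = {{(ii,j),(i,j)}, {(i,jj),(i,j)}}"
    proof
      show "{g\<in>H. (i,j)\<in>g} \<subseteq> {{(ii,j),(i,j)}, {(i,jj),(i,j)}}"
      proof
        fix g assume g: "g \<in> {g\<in>H. (i,j)\<in>g}"
        then have "g \<in> grid_edges m k" "(i,j) \<in> g" "g \<noteq> e" "g \<noteq> f" using Hgrid eH fH by auto
        then show "g \<in> {{(ii,j),(i,j)}, {(i,jj),(i,j)}}"
          using grid_nbr[of g m k i j] ij unfolding e_def f_def by auto
      qed
      show "{{(ii,j),(i,j)}, {(i,jj),(i,j)}} \<subseteq> {g\<in>H. (i,j)\<in>g}" using g1 g2 by auto
    qed
    have s2: "{g\<in>H. (i,Suc j)\<in>g} = {{(ii,Suc j),(i,Suc j)}, {(i,Suc j),(Suc i,Suc j)}}"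
    proof
      show "{g\<in>H. (i,Suc j)\<in>g} \<subseteq> {{(ii,Suc j),(i,Suc j)}, {(i,Suc j),(Suc i,Suc j)}}"
      proof
        fix g assume g: "g \<in> {g\<in>H. (i,Suc j)\<in>g}"
        then have "g \<in> grid_edges m k" "(i,Suc j) \<in> g" "g \<noteq> e" using Hgrid eH by auto
        then show "g \<in> {{(ii,Suc j),(i,Suc j)}, {(i,Suc j),(Suc i,Suc j)}}"
          using grid_nbr[of g m k i "Suc j"] ij unfolding e_def by (auto simp: insert_commute)
      qed
      show "{{(ii,Suc j),(i,Suc j)}, {(i,Suc j),(Suc i,Suc j)}} \<subseteq> {g\<in>H. (i,Suc j)\<in>g}"
        using g3 g4 by auto
    qed
    have d1: "degree H (i,j) = 2" unfolding degree_def s1 using ij by (simp add: doubleton_eq_iff)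
    have d2: "degree H (i,Suc j) = 2" unfolding degree_def s2 using ij by (simp add: doubleton_eq_iff)
    show False using ndeg d1 d2 unfolding H_def e_def by auto
  qed
  have j1: "1 \<le> j" "j \<le> k" "1 \<le> Suc j" "Suc j \<le> k" using ij by auto
  have i1: "1 \<le> ii" "ii \<le> m" "1 \<le> i" "i \<le> m" "1 \<le> Suc i" "Suc i \<le> m" using ij by auto
  define x0 where "x0 = xs j"
  define x1 where "x1 = xs (Suc j)"
  define y0 where "y0 = ys ii"
  define y1 where "y1 = ys i"
  define y2 where "y2 = ys (Suc i)"
  have o1: "y0 < y1" unfolding y0_def y1_def using sm[OF smy, of ii i] i1 ij by simp
  have o2: "y1 < y2" unfolding y2_def y1_def using sm[OF smy, of i "Suc i"] i1 ij by simp
  have o3: "x0 < x1" unfolding x0_def x1_def using sm[OF smx, of j "Suc j"] j1 ij by simp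
  define F where "F = box (x0,y0) (x1,y2)"
  have Fne: "F \<noteq> {}"
  proof -
    have "((x0+x1)/2, (y0+y2)/2) \<in> F" using o1 o2 o3 by (simp add: F_def box_Pair_iff)
    then show ?thesis by blast
  qed
  have disj: "F \<inter> drawing xs ys G = {}"
  proof -
    have "edge_seg xs ys g \<inter> F = {}" if gG: "g \<in> G" for g
    proof -
      have gg: "g \<in> grid_edges m k" and gne: "g \<noteq> e" using gG Ggrid eNG by auto
      from gg consider (V) a b where "g = {(a,b),(Suc a,b)}" "1 \<le> a" "a < m" "1 \<le> b" "b \<le> k"
        | (Hz) a b where "g = {(a,b),(a,Suc b)}" "1 \<le> a" "a \<le> m" "1 \<le> b" "b < k"
        unfolding grid_edges_def by blast
      then show ?thesis
      proof cases
        case Hz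
        have le: "xs b \<le> xs (Suc b)" using sm[OF smx, of b "Suc b"] Hz by simp
        show ?thesis
        proof (rule ccontr)
          assume "edge_seg xs ys g \<inter> F \<noteq> {}"
          then obtain x y where p: "(x,y) \<in> edge_seg xs ys g" "(x,y) \<in> F" by auto
          then have xy: "y = ys a" "xs b \<le> x" "x \<le> xs (Suc b)"
            using le by (auto simp: Hz(1) edge_seg2 pt_def seg_horiz closed_segment_eq_real_ivl)
          have b: "y0 < ys a" "ys a < y2" "x0 < x" "x < x1" using p(2) xy by (auto simp: F_def box_Pair_iff)
          have "ii < a" using b(1) sm[OF smy, of ii a] i1 Hz unfolding y0_def by simp
          moreover have "a < Suc i" using b(2) sm[OF smy, of a "Suc i"] i1 Hz unfolding y2_def by simp
          moreover have "j < Suc b" using b(3) xy sm[OF smx, of j "Suc b"] j1 Hz unfolding x0_def by simp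
          moreover have "b < Suc j" using b(4) xy sm[OF smx, of b "Suc j"] j1 Hz unfolding x1_def by simp
          ultimately have "b = j" "a = i" using ij Hz by auto
          then show False using gne Hz unfolding e_def by simp
        qed
      next
        case V
        show ?thesis
        proof (rule ccontr)
          assume "edge_seg xs ys g \<inter> F \<noteq> {}"
          then obtain x y where p: "(x,y) \<in> edge_seg xs ys g" "(x,y) \<in> F" by auto
          then have xy: "x = xs b"
            by (auto simp: V(1) edge_seg2 pt_def seg_vert)
          have b: "x0 < xs b" "xs b < x1" using p(2) xy by (auto simp: F_def box_Pair_iff)
          have "j < b" using b(1) sm[OF smx, of j b] j1 V unfolding x0_def by simp
          moreover have "b < Suc j" using b(2) sm[OF smx, of b "Suc j"] j1 V unfolding x1_def by simp
          ultimately show False by simp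
        qed
      qed
    qed
    then show ?thesis unfolding drawing_def by blast
  qed
  have cover: "cbox (x0,y0) (x1,y2) - box (x0,y0) (x1,y2) \<subseteq> drawing xs ys G"
  proof
    fix p assume p: "p \<in> cbox (x0,y0) (x1,y2) - box (x0,y0) (x1,y2)"
    obtain x y where pxy: "p = (x,y)" by (cases p)
    have r: "x0 \<le> x" "x \<le> x1" "y0 \<le> y" "y \<le> y2" using p pxy by (auto simp: cbox_interval)
    have nb: "y = y0 \<or> y = y2 \<or> x = x0 \<or> x = x1" using p pxy r by (auto simp: box_Pair_iff)
    have gb: "{(ii,j),(ii,Suc j)} \<in> G" using G0G inG0[of "{(ii,j),(ii,Suc j)}"] ij par
      by (auto simp: grid_horiz_iff red_horiz_iff)
    have gt: "{(Suc i,j),(Suc i,Suc j)} \<in> G" using G0G inG0[of "{(Suc i,j),(Suc i,Suc j)}"] ij par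
      by (auto simp: grid_horiz_iff red_horiz_iff)
    have gr1: "{(ii,Suc j),(i,Suc j)} \<in> G" using G0G inG0[of "{(ii,Suc j),(i,Suc j)}"] ij par
      by (auto simp: grid_vert_iff red_vert_iff)
    have gr2: "{(i,Suc j),(Suc i,Suc j)} \<in> G" using G0G inG0[of "{(i,Suc j),(Suc i,Suc j)}"] ij par
      by (auto simp: grid_vert_iff red_vert_iff)
    have gl1: "{(ii,j),(i,j)} \<in> G" using G0G inG0[of "{(ii,j),(i,j)}"] ij par
      by (auto simp: grid_vert_iff red_vert_iff)
    have s1: "(x,y) \<in> drawing xs ys G"
    proof -
      consider "y = y0" | "y = y2" | "y \<noteq> y0" "y \<noteq> y2" "x = x0" "y \<le> y1" | "y \<noteq> y0" "y \<noteq> y2" "x = x0" "y1 \<le> y"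
        | "y \<noteq> y0" "y \<noteq> y2" "x = x1" "y \<le> y1" | "y \<noteq> y0" "y \<noteq> y2" "x = x1" "y1 \<le> y"
        using nb by linarith
      then show ?thesis
      proof cases
        case 1 then show ?thesis using mem_draw[OF gb] r o3
          by (auto simp: edge_seg2 pt_def seg_horiz closed_segment_eq_real_ivl x0_def y0_def x1_def)
      next
        case 2 then show ?thesis using mem_draw[OF gt] r o3
          by (auto simp: edge_seg2 pt_def seg_horiz closed_segment_eq_real_ivl x0_def x1_def y2_def)
      next
        case 3 then show ?thesis using mem_draw[OF gl1] r o1
          by (auto simp: edge_seg2 pt_def seg_vert closed_segment_eq_real_ivl x0_def y0_def y1_def ij)
      next
        case 4 then show ?thesis using mem_draw[OF fG] r o2
          by (auto simp: f_def edge_seg2 pt_def seg_vert closed_segment_eq_real_ivl x0_def y1_def y2_def)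
      next
        case 5 then show ?thesis using mem_draw[OF gr1] r o1
          by (auto simp: edge_seg2 pt_def seg_vert closed_segment_eq_real_ivl x1_def y0_def y1_def ij)
      next
        case 6 then show ?thesis using mem_draw[OF gr2] r o2
          by (auto simp: edge_seg2 pt_def seg_vert closed_segment_eq_real_ivl x1_def y1_def y2_def)
      qed
    qed
    then show "p \<in> drawing xs ys G" using pxy by simp
  qed
  have face: "F \<in> faces xs ys G"
    unfolding faces_def F_def by (rule rect_face[OF o3 _ _ cover]) (use o1 o2 disj F_def in auto)
  have clo: "closure F = cell xs ys (ii,j) \<union> cell xs ys (i,j)"
  proof -
    have "closure F = cbox (x0,y0) (x1,y2)" using Fne by (simp add: F_def)
    also have "\<dots> = cbox (x0,y0) (x1,y1) \<union> cbox (x0,y1) (x1,y2)"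
      using o1 o2 by (auto simp: cbox_interval)
    also have "\<dots> = cell xs ys (ii,j) \<union> cell xs ys (i,j)"
      by (simp add: cell_def x0_def x1_def y2_def y0_def y1_def ij)
    finally show ?thesis .
  qed
  have cl: "(ii,j) \<in> cells m k" "(i,j) \<in> cells m k" "(ii,j) \<noteq> (i,j)" using ij by (auto simp: cells_def)
  have tc: "two_cell_face m k xs ys G F"
    unfolding two_cell_face_def using face clo cl by (auto simp: F_def)
  have os: "edge_open_seg xs ys e \<subseteq> F"
    using o1 o2 o3 by (auto simp: e_def edge_oseg2 pt_def oseg_horiz open_segment_eq_real_ivl F_def box_Pair_iff x0_def x1_def y1_def)
  show ?thesis using tc os unfolding G_def e_def by blast
qed

theorem lemma3:
  fixes m k :: nat and xs ys :: "nat \<Rightarrow> real"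
    and sl :: "slab list" and ord :: "slab \<Rightarrow> edge list" and e :: edge
  assumes "m \<ge> 3" and "k \<ge> 3"
    and "strict_mono_on {1..k} xs" and "strict_mono_on {1..m} ys"
    and "valid_order m k xs ys sl ord"
    and "e \<in> red_edges m k" and "e \<notin> constructed_graph m k sl ord"
    and "\<exists>v\<in>e. boundary_vertex m k v"
  shows "\<exists>F. two_cell_face m k xs ys (constructed_graph m k sl ord) F
             \<and> edge_open_seg xs ys e \<subseteq> F"
proof -
  from assms(6) consider (V) i j where "e = {(i,j),(Suc i,j)}" "2 \<le> i" "i \<le> m - 1" "2 \<le> j" "j \<le> k - 1" "even i \<longleftrightarrow> even j"
    | (Hz) i j where "e = {(i,j),(i,Suc j)}" "2 \<le> i" "i \<le> m - 1" "2 \<le> j" "j \<le> k - 1" "even i \<longleftrightarrow> even j"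
    unfolding red_edges_def by blast
  then show ?thesis
  proof cases
    case V
    have "Suc i = m" using assms(8) V assms(1,2) by (auto simp: boundary_vertex_def)
    moreover obtain ii jj where "i = Suc ii" "j = Suc jj" using V by (metis Suc_le_D numeral_2_eq_2)
    ultimately show ?thesis using vert_case[OF assms(3,4,5), of i ii j jj] V assms(7) by auto
  next
    case Hz
    have "Suc j = k" using assms(8) Hz assms(1,2) by (auto simp: boundary_vertex_def)
    moreover obtain ii jj where "i = Suc ii" "j = Suc jj" using Hz by (metis Suc_le_D numeral_2_eq_2)
    ultimately show ?thesis using horiz_case[OF assms(3,4,5), of i ii j jj] Hz assms(7) by auto
  qed
qed

end
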